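(* With $\Omega=\{D\}$, $\lambda\in K$, $\mathfrak{S}(X)$ ordered by order $(2)$, and $S=\{D(xy)-D(x)y-xD(y)-\lambda D(x)D(y)\mid x,y\in\mathfrak{S}(X)\}$, we have $Irr(S)=S(D^\omega(X))$, and this set is a $K$-basis of $K\langle X;D|S\rangle=K\langle X;D\rangle/Id(S)$.
   Context: $K$ is a commutative ring with unit, $X$ a well-ordered set, $S(Y)$ the free semigroup on $Y$. $\mathfrak{S}_0=S(X)$, $\mathfrak{S}_n=S(X\cup\{D(u)\mid u\in\mathfrak{S}_{n-1}\})$, $\mathfrak{S}(X)=\bigcup_n\mathfrak{S}_n$; $K\langle X;D\rangle$ is the free $K$-module on $\mathfrak{S}(X)$ with concatenation product and $D$ extended linearly. $\mathfrak{S}^\star(X)$: words on $X\cup\{\star\}$ with exactly one $\star$, $u|_s$ substitution; $Id(S)$ is the $K$-span of all $u|_s$, $s\in S$. $Irr(S)=\{w\in\mathfrak{S}(X)\mid w\ne u|_{\bar s}\ \forall u\in\mathfrak{S}^\star(X),s\in S\}$ with $\bar s$ the leading word. Order (2): write $u=u_1\cdots u_n$ with $u_i\in X\cup D(\mathfrak{S}(X))$, $deg_X(u)$ = number of occurrences of letters of $X$, $wt(u)=(deg_X(u),u_1,\dots,u_n)$, $u>v$ iff $wt(u)>wt(v)$ lexicographically, primes compared by: order of $X$ on letters; $D(u')>x$ for $x\in X$; $D(u')>D(v')$ iff $u'>v'$. $D^\omega(X)=\{D^i(x)\mid i\ge0,x\in X\}$ with $D^0(x)=x$. *)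

theory Defs
  imports Main "HOL-Library.Poly_Mapping"
begin

text \<open>A letter is either a letter of X or D(u) for a word u.
  The elements of \<open>\<frak>S(X)\<close> are the well-formed words: nonempty, with all bracketed
  subwords nonempty.\<close>

datatype 'a letter = Var 'a | Op "'a letter list"

fun wf_letter :: "'a letter \<Rightarrow> bool" where
  "wf_letter (Var x) = True"
| "wf_letter (Op v) = (v \<noteq> [] \<and> (\<forall>l\<in>set v. wf_letter l))"

definition wf_word :: "'a letter list \<Rightarrow> bool" where
  "wf_word w \<longleftrightarrow> w \<noteq> [] \<and> (\<forall>l\<in>set w. wf_letter l)"

primrec deg_letter :: "'a letter \<Rightarrow> nat" where
  "deg_letter (Var x) = 1"
| "deg_letter (Op v) = sum_list (map deg_letter v)"

definition deg_word :: "'a letter list \<Rightarrow> nat" where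
  "deg_word w = sum_list (map deg_letter w)"

section \<open>Order (2)\<close>

inductive word_less :: "'a::linorder letter list \<Rightarrow> 'a letter list \<Rightarrow> bool"
  and lex_less :: "'a letter list \<Rightarrow> 'a letter list \<Rightarrow> bool"
  and letter_less :: "'a letter \<Rightarrow> 'a letter \<Rightarrow> bool" where
  wl_deg: "deg_word u < deg_word v \<Longrightarrow> word_less u v"
| wl_lex: "deg_word u = deg_word v \<Longrightarrow> lex_less u v \<Longrightarrow> word_less u v"
| lx_nil: "lex_less [] (b # v)"
| lx_head: "letter_less a b \<Longrightarrow> lex_less (a # u) (b # v)"
| lx_tail: "lex_less u v \<Longrightarrow> lex_less (a # u) (a # v)"
| ll_var: "x < y \<Longrightarrow> letter_less (Var x) (Var y)"
| ll_var_op: "letter_less (Var x) (Op u)"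
| ll_op: "word_less u v \<Longrightarrow> letter_less (Op u) (Op v)"

section \<open>The module K<X;D>: finitely supported K-valued functions on words\<close>

type_synonym ('a, 'k) opoly = "'a letter list \<Rightarrow>\<^sub>0 'k"

definition mono :: "'a letter list \<Rightarrow> ('a, 'k::comm_ring_1) opoly" where
  "mono w = Poly_Mapping.single w 1"

definition is_opoly :: "('a, 'k::comm_ring_1) opoly \<Rightarrow> bool" where
  "is_opoly f \<longleftrightarrow> (\<forall>w\<in>Poly_Mapping.keys f. wf_word w)"

definition smult :: "'k \<Rightarrow> ('a, 'k::comm_ring_1) opoly \<Rightarrow> ('a, 'k) opoly" where
  "smult c f = Poly_Mapping.map (\<lambda>a. c * a) f"

definition pmul :: "('a, 'k::comm_ring_1) opoly \<Rightarrow> ('a, 'k) opoly \<Rightarrow> ('a, 'k) opoly" where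
  "pmul f g = (\<Sum>u\<in>Poly_Mapping.keys f. \<Sum>v\<in>Poly_Mapping.keys g. Poly_Mapping.single (u @ v) (Poly_Mapping.lookup f u * Poly_Mapping.lookup g v))"

definition pD :: "('a, 'k::comm_ring_1) opoly \<Rightarrow> ('a, 'k) opoly" where
  "pD f = (\<Sum>u\<in>Poly_Mapping.keys f. Poly_Mapping.single [Op u] (Poly_Mapping.lookup f u))"

text \<open>Star words are words over X \<union> {\<star>}, encoded with letters in \<open>'a option\<close>,
  \<open>Var None\<close> being \<star>; they must contain exactly one \<star> (anywhere, also inside brackets).\<close>

primrec star_count_letter :: "'a option letter \<Rightarrow> nat" where
  "star_count_letter (Var x) = (case x of None \<Rightarrow> 1 | Some _ \<Rightarrow> 0)"
| "star_count_letter (Op v) = sum_list (map star_count_letter v)"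

definition star_word :: "'a option letter list \<Rightarrow> bool" where
  "star_word u \<longleftrightarrow> wf_word u \<and> sum_list (map star_count_letter u) = 1"

primrec subst_letter :: "'a letter list \<Rightarrow> 'a option letter \<Rightarrow> 'a letter list" where
  "subst_letter w (Var x) = (case x of None \<Rightarrow> w | Some y \<Rightarrow> [Var y])"
| "subst_letter w (Op v) = [Op (concat (map (subst_letter w) v))]"

definition subst :: "'a option letter list \<Rightarrow> 'a letter list \<Rightarrow> 'a letter list" where
  "subst u w = concat (map (subst_letter w) u)"

definition subst_poly :: "'a option letter list \<Rightarrow> ('a, 'k::comm_ring_1) opoly \<Rightarrow> ('a, 'k) opoly" where
  "subst_poly u s = (\<Sum>w\<in>Poly_Mapping.keys s. Poly_Mapping.single (subst u w) (Poly_Mapping.lookup s w))"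

inductive_set Id_set :: "('a, 'k::comm_ring_1) opoly set \<Rightarrow> ('a, 'k) opoly set"
  for S where
  id_zero: "0 \<in> Id_set S"
| id_add: "f \<in> Id_set S \<Longrightarrow> g \<in> Id_set S \<Longrightarrow> f + g \<in> Id_set S"
| id_smult: "f \<in> Id_set S \<Longrightarrow> smult c f \<in> Id_set S"
| id_gen: "star_word u \<Longrightarrow> s \<in> S \<Longrightarrow> subst_poly u s \<in> Id_set S"

definition lead :: "('a::linorder, 'k::comm_ring_1) opoly \<Rightarrow> 'a letter list" where
  "lead s = (THE w. w \<in> Poly_Mapping.keys s \<and> (\<forall>v\<in>Poly_Mapping.keys s. v \<noteq> w \<longrightarrow> word_less v w))"

definition Irr :: "('a::linorder, 'k::comm_ring_1) opoly set \<Rightarrow> 'a letter list set" where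
  "Irr S = {w. wf_word w \<and> (\<forall>u s. star_word u \<longrightarrow> s \<in> S \<longrightarrow> w \<noteq> subst u (lead s))}"

inductive Dpow :: "'a letter \<Rightarrow> bool" where
  "Dpow (Var x)"
| "Dpow l \<Longrightarrow> Dpow (Op [l])"

definition SDomega :: "'a letter list set" where
  "SDomega = {w. w \<noteq> [] \<and> (\<forall>l\<in>set w. Dpow l)}"

definition S_diff :: "'k \<Rightarrow> ('a, 'k::comm_ring_1) opoly set" where
  "S_diff lam = {pD (pmul (mono x) (mono y)) - pmul (pD (mono x)) (mono y)
                   - pmul (mono x) (pD (mono y)) - smult lam (pmul (pD (mono x)) (pD (mono y)))
                 | x y. wf_word x \<and> wf_word y}"

end

theory Submission
  imports Defs
begin

instantiation list :: (type) monoid_add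
begin
definition plus_list :: "'a list \<Rightarrow> 'a list \<Rightarrow> 'a list" where "plus_list xs ys = xs @ ys"
definition zero_list :: "'a list" where "zero_list = []"
instance by standard (auto simp: plus_list_def zero_list_def)
end

lemma single_nil: "Poly_Mapping.single [] c = Poly_Mapping.single 0 c"
  by (simp add: zero_list_def)

lemma mult_single_list: "Poly_Mapping.single u a * Poly_Mapping.single v b = Poly_Mapping.single (u @ v) (a * b)"
  by (simp add: mult_single plus_list_def)

lemma poly_expand: "(p :: 'b \<Rightarrow>\<^sub>0 'c::comm_monoid_add) = (\<Sum>k\<in>Poly_Mapping.keys p. Poly_Mapping.single k (Poly_Mapping.lookup p k))"
proof (rule poly_mapping_eqI)
  fix j
  have "Poly_Mapping.lookup (\<Sum>k\<in>Poly_Mapping.keys p. Poly_Mapping.single k (Poly_Mapping.lookup p k)) j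
      = (\<Sum>k\<in>Poly_Mapping.keys p. (Poly_Mapping.lookup p k when k = j))"
    by (simp add: lookup_sum lookup_single)
  also have "\<dots> = Poly_Mapping.lookup p j"
    by (cases "j \<in> Poly_Mapping.keys p") (auto simp: when_def in_keys_iff)
  finally show "Poly_Mapping.lookup p j = Poly_Mapping.lookup (\<Sum>k\<in>Poly_Mapping.keys p. Poly_Mapping.single k (Poly_Mapping.lookup p k)) j" by simp
qed

type_synonym ('a,'k) op = "('a, 'k) opoly"

definition sc :: "'k::comm_ring_1 \<Rightarrow> ('a,'k) opoly \<Rightarrow> ('a,'k) opoly" where
  "sc c p = Poly_Mapping.single [] c * p"

lemma smult_sc: "smult c f = sc c f"
  unfolding smult_def sc_def single_nil by (rule mult_map_scale_conv_mult)

lemma central_single: "Poly_Mapping.single [] c * (p::('a,'k::comm_ring_1) opoly) = p * Poly_Mapping.single [] c"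
proof -
  have "Poly_Mapping.single [] c * p = (\<Sum>k\<in>Poly_Mapping.keys p. Poly_Mapping.single [] c * Poly_Mapping.single k (Poly_Mapping.lookup p k))"
    by (subst poly_expand[of p]) (simp add: sum_distrib_left)
  also have "\<dots> = (\<Sum>k\<in>Poly_Mapping.keys p. Poly_Mapping.single k (Poly_Mapping.lookup p k) * Poly_Mapping.single [] c)"
    by (simp add: mult_single_list mult.commute)
  also have "\<dots> = p * Poly_Mapping.single [] c"
    by (subst (2) poly_expand[of p]) (simp add: sum_distrib_right)
  finally show ?thesis .
qed

lemma sc_left: "sc c p * q = sc c (p * q)" by (simp add: sc_def mult.assoc)
lemma sc_right: "p * sc c q = sc c (p * (q::('a,'k::comm_ring_1) opoly))"
  by (simp add: sc_def mult.assoc[symmetric] flip: central_single)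
lemma sc_sc: "sc a (sc b p) = sc (a*b) (p::('a,'k::comm_ring_1) opoly)"
  by (simp add: sc_def mult.assoc[symmetric] mult_single_list)
lemma sc_add: "sc c (p + q) = sc c p + sc c q" by (simp add: sc_def distrib_left)
lemma sc_diff: "sc c (p - q) = sc c p - sc c q" by (simp add: sc_def right_diff_distrib)
lemma sc_zero[simp]: "sc c 0 = 0" "sc 0 p = 0" by (simp_all add: sc_def)
lemma sc_one[simp]: "sc 1 p = p" by (simp add: sc_def single_nil)
lemma sc_addc: "sc (a+b) p = sc a p + sc b p" by (simp add: sc_def single_add distrib_right)
lemma sc_single: "sc c (Poly_Mapping.single w a) = Poly_Mapping.single w (c*a)"
  by (simp add: sc_def mult_single_list)

lemma pmul_eq: "pmul f g = f * (g::('a,'k::comm_ring_1) opoly)"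
proof -
  have "f * g = (\<Sum>u\<in>Poly_Mapping.keys f. Poly_Mapping.single u (Poly_Mapping.lookup f u)) * (\<Sum>v\<in>Poly_Mapping.keys g. Poly_Mapping.single v (Poly_Mapping.lookup g v))"
    by (simp flip: poly_expand)
  also have "\<dots> = pmul f g"
    by (simp add: pmul_def sum_distrib_left sum_distrib_right mult_single_list) (rule sum.swap)
  finally show ?thesis by simp
qed

lemma mono_mult: "mono u * mono v = mono (u @ v)"
  by (simp add: mono_def mult_single_list)
lemma mono_nil: "mono [] = 1"
  by (simp add: mono_def single_nil)
lemma mono_cons: "mono (l # w) = mono [l] * mono w"
  by (simp add: mono_mult)


lemma lookup_sc: "Poly_Mapping.lookup (sc c f) u = c * Poly_Mapping.lookup f u"
  by (simp add: smult_sc[symmetric] smult_def Poly_Mapping.map.rep_eq when_def)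

definition lin :: "('b \<Rightarrow> ('a,'k::comm_ring_1) opoly) \<Rightarrow> ('b \<Rightarrow>\<^sub>0 'k) \<Rightarrow> ('a,'k) opoly" where
  "lin F f = (\<Sum>u\<in>Poly_Mapping.keys f. sc (Poly_Mapping.lookup f u) (F u))"

lemma lin_superset:
  assumes "finite A" "Poly_Mapping.keys f \<subseteq> A"
  shows "lin F f = (\<Sum>u\<in>A. sc (Poly_Mapping.lookup f u) (F u))"
  unfolding lin_def
  by (rule sum.mono_neutral_left) (use assms in \<open>auto simp: in_keys_iff\<close>)

lemma lin_add: "lin F (f + g) = lin F f + lin F g"
proof -
  let ?A = "Poly_Mapping.keys f \<union> Poly_Mapping.keys g"
  have "lin F (f+g) = (\<Sum>u\<in>?A. sc (Poly_Mapping.lookup (f+g) u) (F u))"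
    by (rule lin_superset) (auto simp: keys_add)
  also have "\<dots> = (\<Sum>u\<in>?A. sc (Poly_Mapping.lookup f u) (F u)) + (\<Sum>u\<in>?A. sc (Poly_Mapping.lookup g u) (F u))"
    by (simp add: lookup_add sc_addc sum.distrib)
  also have "\<dots> = lin F f + lin F g"
    by (simp add: lin_superset[symmetric])
  finally show ?thesis .
qed

lemma lin_zero[simp]: "lin F 0 = 0" by (simp add: lin_def)

lemma sc_sum: "sc c (sum g A) = (\<Sum>a\<in>A. sc c (g a))"
  by (simp add: sc_def sum_distrib_left)

lemma lin_sc: "lin F (sc c f) = sc c (lin F f)"
proof -
  have "lin F (sc c f) = (\<Sum>u\<in>Poly_Mapping.keys f. sc (Poly_Mapping.lookup (sc c f) u) (F u))"
    by (rule lin_superset) (auto simp: in_keys_iff lookup_sc)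
  also have "\<dots> = sc c (lin F f)"
    by (simp add: lin_def lookup_sc sc_sc sc_sum)
  finally show ?thesis .
qed

lemma lin_uminus: "lin F (- f) = - lin F f"
proof -
  have h: "lin F f + lin F (-f) = 0" using lin_add[of F f "-f"] by simp
  show ?thesis by (rule sym, subst neg_eq_iff_add_eq_0) (rule h)
qed

lemma lin_diff: "lin F (f - g) = lin F f - lin F g"
  by (simp only: diff_conv_add_uminus lin_add lin_uminus)

lemma lin_single: "lin F (Poly_Mapping.single u c) = sc c (F u)"
  by (cases "c = 0") (simp_all add: lin_def)

lemma lin_mono: "lin F (mono u) = F u"
  by (simp add: mono_def lin_single)

lemma lin_sum: "lin F (sum g A) = (\<Sum>a\<in>A. lin F (g a))"
  by (induction A rule: infinite_finite_induct) (simp_all add: lin_add)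

lemma lin_cong: "(\<And>u. u \<in> Poly_Mapping.keys f \<Longrightarrow> F u = G u) \<Longrightarrow> lin F f = lin G f"
  by (simp add: lin_def)

lemma sc_mono: "sc c (mono u) = Poly_Mapping.single u c"
  by (simp add: mono_def sc_single)

lemma lin_mono_id: "lin mono f = f"
  unfolding lin_def sc_mono by (rule poly_expand[symmetric])

lemma lin_ext:
  assumes add: "\<And>p q. L (p + q) = L p + L q" and scal: "\<And>c p. L (sc c p) = sc c (L p)"
  shows "L f = lin (\<lambda>u. L (mono u)) f"
proof -
  have z: "L 0 = 0" using scal[of 0 0] by simp
  have "L (\<Sum>u\<in>A. sc (Poly_Mapping.lookup f u) (mono u)) = (\<Sum>u\<in>A. sc (Poly_Mapping.lookup f u) (L (mono u)))" for A
    by (induction A rule: infinite_finite_induct) (simp_all add: z add scal)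
  then have h: "L (\<Sum>u\<in>Poly_Mapping.keys f. sc (Poly_Mapping.lookup f u) (mono u)) = lin (\<lambda>u. L (mono u)) f"
    by (simp add: lin_def)
  have e: "(\<Sum>u\<in>Poly_Mapping.keys f. sc (Poly_Mapping.lookup f u) (mono u)) = f"
    using lin_mono_id[of f] by (simp add: lin_def)
  show ?thesis using h unfolding e .
qed


section \<open>The lambda-derivation on S(D^omega(X))\<close>

fun dw :: "'k::comm_ring_1 \<Rightarrow> 'a letter list \<Rightarrow> ('a,'k) opoly" where
  "dw lam [] = 0"
| "dw lam (l # w) = mono [Op [l]] * mono w + mono [l] * dw lam w + sc lam (mono [Op [l]] * dw lam w)"

definition dp :: "'k::comm_ring_1 \<Rightarrow> ('a,'k) opoly \<Rightarrow> ('a,'k) opoly" where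
  "dp lam = lin (dw lam)"

lemma ring_central_aux:
  fixes A L U V du dv X :: "'r::ring"
  assumes c: "\<And>z. z * X = X * z"
  shows "A*(U*V) + L*(du*V + U*dv + X*(du*dv)) + X*(A*(du*V + U*dv + X*(du*dv)))
    = (A*U + L*du + X*(A*du))*V + (L*U)*dv + X*((A*U + L*du + X*(A*du))*dv)"
proof -
  have mA: "A * (X * w) = X * (A * w)" for w by (simp add: mult.assoc[symmetric] c)
  have mL: "L * (X * w) = X * (L * w)" for w by (simp add: mult.assoc[symmetric] c)
  show ?thesis by (simp add: distrib_left distrib_right mult.assoc mA mL add_ac)
qed

lemma dw_append: "dw lam (u @ v) = dw lam u * mono v + mono u * dw lam v + sc lam (dw lam u * dw lam v)"
proof (induction u)
  case Nil
  then show ?case by (simp add: mono_nil)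
next
  case (Cons l u)
  show ?case
    apply (simp only: append_Cons dw.simps Cons)
    apply (simp only: mono_cons[of l u] mono_mult[symmetric] sc_def)
    apply (rule ring_central_aux)
    apply (rule central_single[symmetric])
    done
qed


lemma linear_eqI:
  assumes "\<And>p q. La (p + q) = La p + La q" "\<And>c p. La (sc c p) = sc c (La p)"
    and "\<And>p q. Lb (p + q) = Lb p + Lb q" "\<And>c p. Lb (sc c p) = sc c (Lb p)"
    and "\<And>u. La (mono u) = Lb (mono u)"
  shows "La f = Lb f"
  using lin_ext[of La f] lin_ext[of Lb f] assms by simp

lemma dp_add: "dp lam (p + q) = dp lam p + dp lam q" by (simp add: dp_def lin_add)
lemma dp_sc: "dp lam (sc c p) = sc c (dp lam p)" by (simp add: dp_def lin_sc)
lemma dp_mono: "dp lam (mono w) = dw lam w" by (simp add: dp_def lin_mono)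
lemma dp_zero[simp]: "dp lam 0 = 0" by (simp add: dp_def)
lemma dp_diff: "dp lam (p - q) = dp lam p - dp lam q" by (simp add: dp_def lin_diff)

lemma dp_mult: "dp lam (f * g) = dp lam f * g + f * dp lam g + sc lam (dp lam f * dp lam g)"
proof -
  have mono_case: "dp lam (mono u * g) = dp lam (mono u) * g + mono u * dp lam g + sc lam (dp lam (mono u) * dp lam g)" for u
    by (rule linear_eqI[where La="\<lambda>g. dp lam (mono u * g)" and Lb="\<lambda>g. dp lam (mono u) * g + mono u * dp lam g + sc lam (dp lam (mono u) * dp lam g)"])
       (simp_all add: distrib_left dp_add sc_add sc_right dp_sc mono_mult dp_mono dw_append add_ac sc_sc mult.commute)
  show ?thesis
    by (rule linear_eqI[where La="\<lambda>f. dp lam (f * g)" and Lb="\<lambda>f. dp lam f * g + f * dp lam g + sc lam (dp lam f * dp lam g)"])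
       (simp_all add: distrib_right dp_add sc_add sc_left dp_sc mono_case add_ac sc_sc mult.commute)
qed


section \<open>Normal form map\<close>

fun Nl :: "'k::comm_ring_1 \<Rightarrow> 'a letter \<Rightarrow> ('a,'k) opoly"
and Nw :: "'k::comm_ring_1 \<Rightarrow> 'a letter list \<Rightarrow> ('a,'k) opoly" where
  "Nl lam (Var x) = mono [Var x]"
| "Nl lam (Op v) = dp lam (Nw lam v)"
| "Nw lam [] = 1"
| "Nw lam (l # w) = Nl lam l * Nw lam w"

definition NP :: "'k::comm_ring_1 \<Rightarrow> ('a,'k) opoly \<Rightarrow> ('a,'k) opoly" where
  "NP lam = lin (Nw lam)"

lemma Nw_append: "Nw lam (u @ v) = Nw lam u * Nw lam v"
  by (induction u) (simp_all add: mult.assoc)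

lemma NP_add: "NP lam (p + q) = NP lam p + NP lam q" by (simp add: NP_def lin_add)
lemma NP_sc: "NP lam (sc c p) = sc c (NP lam p)" by (simp add: NP_def lin_sc)
lemma NP_mono: "NP lam (mono w) = Nw lam w" by (simp add: NP_def lin_mono)
lemma NP_diff: "NP lam (p - q) = NP lam p - NP lam q" by (simp add: NP_def lin_diff)

lemma NP_mult: "NP lam (f * g) = NP lam f * NP lam g"
proof -
  have mono_case: "NP lam (mono u * g) = NP lam (mono u) * NP lam g" for u
    by (rule linear_eqI[where La="\<lambda>g. NP lam (mono u * g)" and Lb="\<lambda>g. NP lam (mono u) * NP lam g"])
       (simp_all add: distrib_left NP_add sc_right NP_sc mono_mult NP_mono Nw_append)
  show ?thesis
    by (rule linear_eqI[where La="\<lambda>f. NP lam (f * g)" and Lb="\<lambda>f. NP lam f * NP lam g"])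
       (simp_all add: distrib_right NP_add sc_left NP_sc mono_case)
qed

lemma pD_lin: "pD f = lin (\<lambda>u. mono [Op u]) f"
  by (simp add: pD_def lin_def sc_mono)

lemma pD_add: "pD (p + q) = pD p + pD q" by (simp add: pD_lin lin_add)
lemma pD_sc: "pD (sc c p) = sc c (pD p)" by (simp add: pD_lin lin_sc)
lemma pD_mono: "pD (mono u) = mono [Op u]" by (simp add: pD_lin lin_mono)

lemma NP_pD: "NP lam (pD p) = dp lam (NP lam p)"
  by (rule linear_eqI[where La="\<lambda>p. NP lam (pD p)" and Lb="\<lambda>p. dp lam (NP lam p)"])
     (simp_all add: pD_add NP_add dp_add pD_sc NP_sc dp_sc pD_mono NP_mono)

lemma NP_gen:
  assumes "s \<in> S_diff lam"
  shows "NP lam s = 0"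
proof -
  obtain x y where s: "s = pD (pmul (mono x) (mono y)) - pmul (pD (mono x)) (mono y)
                   - pmul (mono x) (pD (mono y)) - smult lam (pmul (pD (mono x)) (pD (mono y)))"
    using assms unfolding S_diff_def by blast
  show ?thesis
    unfolding s pmul_eq smult_sc NP_diff NP_pD NP_mult NP_sc NP_mono dp_mult by simp
qed


fun Pl :: "'k::comm_ring_1 \<Rightarrow> ('a,'k) opoly \<Rightarrow> 'a option letter \<Rightarrow> ('a,'k) opoly"
and Pw :: "'k::comm_ring_1 \<Rightarrow> ('a,'k) opoly \<Rightarrow> 'a option letter list \<Rightarrow> ('a,'k) opoly" where
  "Pl lam p (Var x) = (case x of None \<Rightarrow> p | Some y \<Rightarrow> mono [Var y])"
| "Pl lam p (Op v) = dp lam (Pw lam p v)"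
| "Pw lam p [] = 1"
| "Pw lam p (l # v) = Pl lam p l * Pw lam p v"

lemma word_from_letters:
  assumes "\<And>l. l \<in> set u \<Longrightarrow> Nw lam (subst_letter w l) = Pl lam (Nw lam w) l"
  shows "Nw lam (concat (map (subst_letter w) u)) = Pw lam (Nw lam w) u"
  using assms by (induction u) (simp_all add: Nw_append)

lemma Nw_subst_letter: "Nw lam (subst_letter w l) = Pl lam (Nw lam w) l"
proof (induction l)
  case (Var x)
  then show ?case by (cases x) simp_all
next
  case (Op v)
  then show ?case using word_from_letters[of v lam w] by simp
qed

lemma Nw_subst: "Nw lam (subst u w) = Pw lam (Nw lam w) u"
  unfolding subst_def by (rule word_from_letters) (rule Nw_subst_letter)

definition lin_in :: "(('a,'k::comm_ring_1) opoly \<Rightarrow> ('a,'k) opoly) \<Rightarrow> bool" where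
  "lin_in L \<longleftrightarrow> (\<forall>p q. L (p + q) = L p + L q) \<and> (\<forall>c p. L (sc c p) = sc c (L p))"

abbreviation cw :: "'a option letter list \<Rightarrow> nat" where
  "cw u \<equiv> sum_list (map star_count_letter u)"

lemma Pw_from_letters:
  assumes "\<And>l. l \<in> set u \<Longrightarrow> (star_count_letter l = 0 \<longrightarrow> (\<forall>p q. Pl lam p l = Pl lam q l))
                 \<and> (star_count_letter l = 1 \<longrightarrow> lin_in (\<lambda>p. Pl lam p l))"
  shows "(cw u = 0 \<longrightarrow> (\<forall>p q. Pw lam p u = Pw lam q u)) \<and> (cw u = 1 \<longrightarrow> lin_in (\<lambda>p. Pw lam p u))"
  using assms
proof (induction u)
  case Nil
  then show ?case by simp
next
  case (Cons l r)
  then have IH: "(cw r = 0 \<longrightarrow> (\<forall>p q. Pw lam p r = Pw lam q r)) \<and> (cw r = 1 \<longrightarrow> lin_in (\<lambda>p. Pw lam p r))"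
    and L: "(star_count_letter l = 0 \<longrightarrow> (\<forall>p q. Pl lam p l = Pl lam q l))
                 \<and> (star_count_letter l = 1 \<longrightarrow> lin_in (\<lambda>p. Pl lam p l))" by auto
  show ?case
  proof (intro conjI impI)
    assume "cw (l # r) = 0"
    then show "\<forall>p q. Pw lam p (l # r) = Pw lam q (l # r)" using IH L by simp metis
  next
    assume c: "cw (l # r) = 1"
    have e: "star_count_letter l + cw r = 1" using c by simp
    from e consider "star_count_letter l = 1" "cw r = 0" | "star_count_letter l = 0" "cw r = 1"
      unfolding One_nat_def add_is_1 by (elim disjE conjE) simp_all
    then show "lin_in (\<lambda>p. Pw lam p (l # r))"
    proof cases
      case 1
      then have a: "Pl lam (p + q) l = Pl lam p l + Pl lam q l" "Pl lam (sc c p) l = sc c (Pl lam p l)"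
        and b: "Pw lam p' r = Pw lam q' r" for p q c p' q'
        using IH L by (auto simp: lin_in_def)
      show ?thesis unfolding lin_in_def
        apply (simp add: a distrib_right sc_left)
        using b by metis
    next
      case 2
      then have a: "Pw lam (p + q) r = Pw lam p r + Pw lam q r" "Pw lam (sc c p) r = sc c (Pw lam p r)"
        and b: "Pl lam p' l = Pl lam q' l" for p q c p' q'
        using IH L by (auto simp: lin_in_def)
      show ?thesis unfolding lin_in_def
        apply (simp add: a distrib_left sc_right)
        using b by metis
    qed
  qed
qed

lemma Pl_lin: "(star_count_letter l = 0 \<longrightarrow> (\<forall>p q. Pl lam p l = Pl lam q l))
                 \<and> (star_count_letter l = 1 \<longrightarrow> lin_in (\<lambda>p. Pl lam p l))"
proof (induction l)
  case (Var x)
  then show ?case by (cases x) (simp_all add: lin_in_def)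
next
  case (Op v)
  have W: "(cw v = 0 \<longrightarrow> (\<forall>p q. Pw lam p v = Pw lam q v)) \<and> (cw v = 1 \<longrightarrow> lin_in (\<lambda>p. Pw lam p v))"
    using Pw_from_letters[of v lam] Op by blast
  show ?case
  proof (intro conjI impI)
    assume "star_count_letter (Op v) = 0"
    then have "cw v = 0" by simp
    then have "Pw lam p v = Pw lam q v" for p q using W by blast
    then show "\<forall>p q. Pl lam p (Op v) = Pl lam q (Op v)" by (simp, metis)
  next
    assume "star_count_letter (Op v) = 1"
    then have "cw v = 1" by simp
    then have "Pw lam (p + q) v = Pw lam p v + Pw lam q v" "Pw lam (sc c p) v = sc c (Pw lam p v)" for p q c
      using W unfolding lin_in_def by blast+
    then show "lin_in (\<lambda>p. Pl lam p (Op v))" unfolding lin_in_def by (simp add: dp_add dp_sc)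
  qed
qed

lemma Pw_lin: "cw u = 1 \<Longrightarrow> lin_in (\<lambda>p. Pw lam p u)"
  using Pw_from_letters[of u lam] Pl_lin by blast

lemma lin_compose:
  assumes "lin_in L"
  shows "L (lin F s) = lin (\<lambda>w. L (F w)) s"
proof -
  have z: "L 0 = 0" using assms unfolding lin_in_def by (metis sc_zero(2))
  have "L (\<Sum>w\<in>A. sc (Poly_Mapping.lookup s w) (F w)) = (\<Sum>w\<in>A. sc (Poly_Mapping.lookup s w) (L (F w)))" for A
    using assms unfolding lin_in_def by (induction A rule: infinite_finite_induct) (simp_all add: z)
  then show ?thesis by (simp add: lin_def)
qed

lemma subst_poly_lin: "subst_poly u s = lin (\<lambda>w. mono (subst u w)) s"
  by (simp add: subst_poly_def lin_def sc_mono)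

lemma NP_lin_in: "lin_in (NP lam)"
  by (simp add: lin_in_def NP_add NP_sc)

lemma NP_subst_poly:
  assumes "star_word u"
  shows "NP lam (subst_poly u s) = Pw lam (NP lam s) u"
proof -
  have L: "lin_in (\<lambda>p. Pw lam p u)" using assms Pw_lin unfolding star_word_def by blast
  have "NP lam (subst_poly u s) = lin (\<lambda>w. NP lam (mono (subst u w))) s"
    unfolding subst_poly_lin by (rule lin_compose[OF NP_lin_in])
  also have "\<dots> = lin (\<lambda>w. Pw lam (Nw lam w) u) s"
    by (simp add: NP_mono Nw_subst)
  also have "\<dots> = Pw lam (NP lam s) u"
    unfolding NP_def by (rule lin_compose[OF L, symmetric])
  finally show ?thesis .
qed

lemma NP_Id: "f \<in> Id_set (S_diff lam) \<Longrightarrow> NP lam f = 0"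
proof (induction rule: Id_set.induct)
  case id_zero then show ?case by (simp add: NP_def)
next
  case (id_add f g) then show ?case by (simp add: NP_add)
next
  case (id_smult f c) then show ?case by (simp add: smult_sc NP_sc)
next
  case (id_gen u s)
  have L: "lin_in (\<lambda>p. Pw lam p u)" using id_gen Pw_lin unfolding star_word_def by blast
  have "Pw lam 0 u = 0" using L unfolding lin_in_def by (metis sc_zero(2))
  then show ?case using id_gen NP_subst_poly NP_gen by metis
qed


lemma Nl_Dpow: "Dpow l \<Longrightarrow> Nl lam l = mono [l]"
  by (induction rule: Dpow.induct) (simp_all add: dp_mono mono_nil)

lemma Nw_Dpow: "\<forall>l\<in>set w. Dpow l \<Longrightarrow> Nw lam w = mono w"
  by (induction w) (simp_all add: Nl_Dpow mono_nil mono_mult)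

lemma NP_SDomega:
  assumes "Poly_Mapping.keys g \<subseteq> SDomega"
  shows "NP lam g = g"
proof -
  have "NP lam g = lin mono g"
    unfolding NP_def by (rule lin_cong) (use assms in \<open>auto simp: SDomega_def Nw_Dpow\<close>)
  then show ?thesis by (simp add: lin_mono_id)
qed

definition DL :: "'a letter list set" where "DL = {w. \<forall>l\<in>set w. Dpow l}"

lemma keys_mult_sub: "Poly_Mapping.keys (p * (q::('a,'k::comm_ring_1) opoly)) \<subseteq> {a @ b | a b. a \<in> Poly_Mapping.keys p \<and> b \<in> Poly_Mapping.keys q}"
  using keys_mult[of p q] by (simp add: plus_list_def)

lemma keys_mono: "Poly_Mapping.keys (mono w :: ('a,'k::comm_ring_1) opoly) = {w}"
  by (simp add: mono_def)

lemma keys_sc: "Poly_Mapping.keys (sc c p) \<subseteq> Poly_Mapping.keys p"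
  by (auto simp: in_keys_iff lookup_sc)

lemma keys_lin: "Poly_Mapping.keys (lin F f) \<subseteq> (\<Union>u\<in>Poly_Mapping.keys f. Poly_Mapping.keys (F u))"
proof -
  have "Poly_Mapping.keys (lin F f) \<subseteq> (\<Union>u\<in>Poly_Mapping.keys f. Poly_Mapping.keys (sc (Poly_Mapping.lookup f u) (F u)))"
    unfolding lin_def by (rule keys_sum)
  then show ?thesis using keys_sc by blast
qed

lemma keys_mult_gen:
  assumes "Poly_Mapping.keys p \<subseteq> A" "Poly_Mapping.keys q \<subseteq> B" "\<And>a b. a \<in> A \<Longrightarrow> b \<in> B \<Longrightarrow> a @ b \<in> C"
  shows "Poly_Mapping.keys (p * (q::('a,'k::comm_ring_1) opoly)) \<subseteq> C"
proof
  fix x assume "x \<in> Poly_Mapping.keys (p * q)"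
  then obtain a b where "x = a @ b" "a \<in> Poly_Mapping.keys p" "b \<in> Poly_Mapping.keys q"
    using keys_mult_sub[of p q] by blast
  then show "x \<in> C" using assms by blast
qed

lemma keys_mult_SD1: "Poly_Mapping.keys p \<subseteq> SDomega \<Longrightarrow> Poly_Mapping.keys q \<subseteq> DL \<Longrightarrow> Poly_Mapping.keys (p * (q::('a,'k::comm_ring_1) opoly)) \<subseteq> SDomega"
  by (rule keys_mult_gen) (auto simp: SDomega_def DL_def)
lemma keys_mult_SD2: "Poly_Mapping.keys p \<subseteq> DL \<Longrightarrow> Poly_Mapping.keys q \<subseteq> SDomega \<Longrightarrow> Poly_Mapping.keys (p * (q::('a,'k::comm_ring_1) opoly)) \<subseteq> SDomega"
  by (rule keys_mult_gen) (auto simp: SDomega_def DL_def)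
lemma keys_mult_DL: "Poly_Mapping.keys p \<subseteq> DL \<Longrightarrow> Poly_Mapping.keys q \<subseteq> DL \<Longrightarrow> Poly_Mapping.keys (p * (q::('a,'k::comm_ring_1) opoly)) \<subseteq> DL"
  by (rule keys_mult_gen) (auto simp: DL_def)

lemma keys_dw: "w \<in> DL \<Longrightarrow> Poly_Mapping.keys (dw lam w) \<subseteq> SDomega"
proof (induction w)
  case Nil then show ?case by simp
next
  case (Cons l w)
  then have l: "Dpow l" and w: "w \<in> DL" by (auto simp: DL_def)
  then have IH: "Poly_Mapping.keys (dw lam w) \<subseteq> SDomega" using Cons by blast
  have ol: "Dpow (Op [l])" using l by (rule Dpow.intros)
  have k1: "Poly_Mapping.keys (mono [Op [l]] * mono w :: ('a,'b) opoly) \<subseteq> SDomega"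
    using ol w by (auto simp: mono_mult keys_mono SDomega_def DL_def)
  have k2: "Poly_Mapping.keys (mono [l] * dw lam w) \<subseteq> SDomega"
    using l IH by (intro keys_mult_SD2) (auto simp: keys_mono DL_def)
  have k3: "Poly_Mapping.keys (mono [Op [l]] * dw lam w) \<subseteq> SDomega"
    using ol IH by (intro keys_mult_SD2) (auto simp: keys_mono DL_def)
  show ?case unfolding dw.simps
    by (intro subset_trans[OF keys_add] Un_least k1 k2 subset_trans[OF keys_sc k3])
qed

lemma SDomega_DL: "SDomega \<subseteq> DL" by (auto simp: SDomega_def DL_def)

lemma keys_dp: "Poly_Mapping.keys p \<subseteq> DL \<Longrightarrow> Poly_Mapping.keys (dp lam p) \<subseteq> SDomega"
  unfolding dp_def using keys_lin[of "dw lam" p] keys_dw by blast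

lemma keys_N:
  fixes lam :: "'k::comm_ring_1" and l :: "'a letter" and lam' :: 'k and w :: "'a letter list"
  shows "Poly_Mapping.keys (Nl lam l) \<subseteq> SDomega"
  and keys_Nw: "Poly_Mapping.keys (Nw lam' w) \<subseteq> DL \<and> (w \<noteq> [] \<longrightarrow> Poly_Mapping.keys (Nw lam' w) \<subseteq> SDomega)"
proof (induction lam l and lam' w rule: Nl_Nw.induct)
  case (1 lam x)
  then show ?case by (simp add: keys_mono SDomega_def Dpow.intros)
next
  case (2 lam v)
  then show ?case using keys_dp[of "Nw lam v" lam] by simp
next
  case (3 lam)
  then show ?case by (simp add: DL_def keys_mono flip: mono_nil)
next
  case (4 lam l w)
  then show ?case using keys_mult_SD1[of "Nl lam l" "Nw lam w"] SDomega_DL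
    by auto
qed


section \<open>Closure properties of Id\<close>

lemma Id_sc: "f \<in> Id_set S \<Longrightarrow> sc c f \<in> Id_set S"
  using Id_set.id_smult[of f S c] by (simp add: smult_sc)

lemma Id_diff: "f \<in> Id_set S \<Longrightarrow> g \<in> Id_set S \<Longrightarrow> f - g \<in> Id_set S"
proof -
  assume "f \<in> Id_set S" "g \<in> Id_set S"
  then have "f + sc (-1) g \<in> Id_set S" by (intro Id_set.id_add Id_sc)
  moreover have "sc (-1) g = - g" by (simp add: sc_def single_uminus single_nil)
  ultimately show ?thesis by simp
qed

lemma Id_sum: "(\<And>a. a \<in> A \<Longrightarrow> g a \<in> Id_set S) \<Longrightarrow> sum g A \<in> Id_set S"
  by (induction A rule: infinite_finite_induct) (auto intro: Id_set.intros)

lemma Id_lin: "(\<And>w. w \<in> Poly_Mapping.keys q \<Longrightarrow> F w \<in> Id_set S) \<Longrightarrow> lin F q \<in> Id_set S"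
  unfolding lin_def by (intro Id_sum Id_sc) auto

fun lift_letter :: "'a letter \<Rightarrow> 'a option letter" where
  "lift_letter (Var x) = Var (Some x)"
| "lift_letter (Op v) = Op (map lift_letter v)"

lemma lift_props: "subst_letter w (lift_letter l) = [l] \<and> star_count_letter (lift_letter l) = 0
    \<and> wf_letter (lift_letter l) = wf_letter l"
proof (induction l)
  case (Var x) then show ?case by simp
next
  case (Op v)
  have "concat (map (subst_letter w) (map lift_letter v)) = v"
    using Op by (induction v) auto
  moreover have "sum_list (map star_count_letter (map lift_letter v)) = 0"
    using Op by (induction v) auto
  moreover have "(\<forall>l\<in>set (map lift_letter v). wf_letter l) = (\<forall>l\<in>set v. wf_letter l)"
    using Op by auto
  ultimately show ?case by simp
qed

lemma subst_lift: "concat (map (subst_letter w) (map lift_letter a)) = a"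
  by (induction a) (simp_all add: lift_props)
lemma subst_lift': "concat (map (subst_letter w \<circ> lift_letter) a) = a"
  by (induction a) (simp_all add: lift_props)
lemma count_lift': "sum_list (map (star_count_letter \<circ> lift_letter) a) = 0"
  by (induction a) (simp_all add: lift_props)
lemma count_lift: "sum_list (map star_count_letter (map lift_letter a)) = 0"
  by (induction a) (simp_all add: lift_props)

definition wfl :: "'a letter list \<Rightarrow> bool" where "wfl w \<longleftrightarrow> (\<forall>l\<in>set w. wf_letter l)"

lemma star_ctx:
  assumes "star_word u" "wfl a" "wfl b"
  shows "star_word (map lift_letter a @ u @ map lift_letter b)"
    and "subst (map lift_letter a @ u @ map lift_letter b) w = a @ subst u w @ b"
  using assms by (auto simp: star_word_def wf_word_def wfl_def lift_props count_lift count_lift' subst_def subst_lift subst_lift')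

lemma star_Op:
  assumes "star_word u"
  shows "star_word [Op u]" and "subst [Op u] w = [Op (subst u w)]"
  using assms by (auto simp: star_word_def wf_word_def subst_def)

lemma lin_in_ctx: "lin_in (\<lambda>p. mono a * p * mono b :: ('a,'k::comm_ring_1) opoly)"
  by (simp add: lin_in_def distrib_left distrib_right sc_left sc_right)

lemma pD_lin_in: "lin_in pD"
  by (simp add: lin_in_def pD_add pD_sc)

lemma Id_ctx:
  assumes "f \<in> Id_set S" "wfl a" "wfl b"
  shows "mono a * f * mono b \<in> Id_set S"
  using assms(1)
proof (induction rule: Id_set.induct)
  case id_zero then show ?case by (simp add: Id_set.id_zero)
next
  case (id_add f g) then show ?case by (simp add: distrib_left distrib_right Id_set.id_add)
next
  case (id_smult f c) then show ?case by (simp add: smult_sc sc_left sc_right Id_sc)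
next
  case (id_gen u s)
  have "mono a * subst_poly u s * mono b = lin (\<lambda>w. mono a * mono (subst u w) * mono b) s"
    unfolding subst_poly_lin by (rule lin_compose[OF lin_in_ctx])
  also have "\<dots> = subst_poly (map lift_letter a @ u @ map lift_letter b) s"
    unfolding subst_poly_lin using star_ctx(2)[OF id_gen(1) assms(2,3)] by (simp add: mono_mult)
  finally show ?case using star_ctx(1)[OF id_gen(1) assms(2,3)] id_gen(2) by (simp add: Id_set.id_gen)
qed

lemma Id_pD:
  assumes "f \<in> Id_set S"
  shows "pD f \<in> Id_set S"
  using assms
proof (induction rule: Id_set.induct)
  case id_zero then show ?case by (simp add: pD_def Id_set.id_zero)
next
  case (id_add f g) then show ?case by (simp add: pD_add Id_set.id_add)
next
  case (id_smult f c) then show ?case by (simp add: smult_sc pD_sc Id_sc)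
next
  case (id_gen u s)
  have "pD (subst_poly u s) = lin (\<lambda>w. pD (mono (subst u w))) s"
    unfolding subst_poly_lin by (rule lin_compose[OF pD_lin_in])
  also have "\<dots> = subst_poly [Op u] s"
    unfolding subst_poly_lin using star_Op(2)[OF id_gen(1)] by (simp add: pD_mono)
  finally show ?case using star_Op(1)[OF id_gen(1)] id_gen(2) by (simp add: Id_set.id_gen)
qed

lemma Id_lmul:
  assumes "f \<in> Id_set S" "\<forall>k\<in>Poly_Mapping.keys q. wfl k"
  shows "q * f \<in> Id_set S"
proof -
  have "q * f = lin (\<lambda>k. mono k * f * mono []) q"
    using lin_ext[of "\<lambda>q. q * f" q] by (simp add: distrib_right sc_left mono_nil)
  also have "\<dots> \<in> Id_set S" using assms by (intro Id_lin Id_ctx) (auto simp: wfl_def)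
  finally show ?thesis .
qed

lemma Id_rmul:
  assumes "f \<in> Id_set S" "\<forall>k\<in>Poly_Mapping.keys q. wfl k"
  shows "f * q \<in> Id_set S"
proof -
  have "f * q = lin (\<lambda>k. mono [] * f * mono k) q"
    using lin_ext[of "\<lambda>q. f * q" q] by (simp add: distrib_left sc_right mono_nil)
  also have "\<dots> \<in> Id_set S" using assms by (intro Id_lin Id_ctx) (auto simp: wfl_def)
  finally show ?thesis .
qed


section \<open>Reduction to normal form modulo Id\<close>

lemma Dpow_wf: "Dpow l \<Longrightarrow> wf_letter l"
  by (induction rule: Dpow.induct) auto

lemma star_var: "star_word [Var None]" and subst_var: "subst [Var None] w = w"
  by (simp_all add: star_word_def wf_word_def subst_def)

lemma gen_Id: "s \<in> S \<Longrightarrow> s \<in> Id_set S"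
proof -
  assume "s \<in> S"
  then have "subst_poly [Var None] s \<in> Id_set S" by (rule Id_set.id_gen[OF star_var])
  moreover have "subst_poly [Var None] s = s"
    by (simp add: subst_poly_lin subst_var lin_mono_id)
  ultimately show ?thesis by simp
qed

lemma ring_aux2:
  fixes M A R L Or dr X :: "'r::ring"
  shows "M - (A*R + L*dr + X*(A*dr)) = (M - A*R - L*Or - X*(A*Or)) + L*(Or - dr) + X*(A*(Or - dr))"
  by (simp add: algebra_simps)

lemma pD_dw: "w \<in> DL \<Longrightarrow> w \<noteq> [] \<Longrightarrow> mono [Op w] - dw lam w \<in> Id_set (S_diff lam)"
proof (induction w)
  case Nil then show ?case by simp
next
  case (Cons l r)
  then have l: "Dpow l" and rD: "r \<in> DL" by (auto simp: DL_def)
  show ?case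
  proof (cases "r = []")
    case True
    then show ?thesis by (simp add: mono_nil Id_set.id_zero)
  next
    case False
    then have E: "mono [Op r] - dw lam r \<in> Id_set (S_diff lam)" using Cons rD by blast
    have wl: "wf_word [l]" using Dpow_wf[OF l] by (simp add: wf_word_def)
    have wr: "wf_word r" using False rD Dpow_wf by (auto simp: wf_word_def DL_def)
    have sS: "pD (pmul (mono [l]) (mono r)) - pmul (pD (mono [l])) (mono r)
                   - pmul (mono [l]) (pD (mono r)) - smult lam (pmul (pD (mono [l])) (pD (mono r))) \<in> S_diff lam"
      unfolding S_diff_def using wl wr by blast
    have s_eq: "pD (pmul (mono [l]) (mono r)) - pmul (pD (mono [l])) (mono r)
                   - pmul (mono [l]) (pD (mono r)) - smult lam (pmul (pD (mono [l])) (pD (mono r)))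
       = mono [Op (l # r)] - mono [Op [l]] * mono r - mono [l] * mono [Op r] - Poly_Mapping.single [] lam * (mono [Op [l]] * mono [Op r])"
      by (simp add: pmul_eq smult_sc pD_mono mono_mult sc_def)
    have s_in: "mono [Op (l # r)] - mono [Op [l]] * mono r - mono [l] * mono [Op r] - Poly_Mapping.single [] lam * (mono [Op [l]] * mono [Op r]) \<in> Id_set (S_diff lam)"
      using gen_Id[OF sS] unfolding s_eq .
    have wfl1: "wfl [l]" "wfl [Op [l]]" "wfl []" using Dpow_wf[OF l] by (auto simp: wfl_def)
    have t2: "mono [l] * (mono [Op r] - dw lam r) \<in> Id_set (S_diff lam)"
      using Id_ctx[OF E wfl1(1) wfl1(3)] by (simp add: mono_nil)
    have t3: "Poly_Mapping.single [] lam * (mono [Op [l]] * (mono [Op r] - dw lam r)) \<in> Id_set (S_diff lam)"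
      using Id_sc[OF Id_ctx[OF E wfl1(2) wfl1(3)], of lam] by (simp add: mono_nil sc_def)
    have eq: "mono [Op (l # r)] - dw lam (l # r) = (mono [Op (l # r)] - mono [Op [l]] * mono r - mono [l] * mono [Op r] - Poly_Mapping.single [] lam * (mono [Op [l]] * mono [Op r]))
       + mono [l] * (mono [Op r] - dw lam r) + Poly_Mapping.single [] lam * (mono [Op [l]] * (mono [Op r] - dw lam r))"
      unfolding dw.simps sc_def by (rule ring_aux2)
    show ?thesis unfolding eq by (intro Id_set.id_add s_in t2 t3)
  qed
qed

lemma lin_fun_diff: "lin (\<lambda>w. F w - G w) q = lin F q - lin G q"
  by (simp add: lin_def sc_diff sum_subtractf)

lemma pD_diff: "pD (p - q) = pD p - pD q" by (simp add: pD_lin lin_diff)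

lemma pD_dp: "Poly_Mapping.keys q \<subseteq> SDomega \<Longrightarrow> pD q - dp lam q \<in> Id_set (S_diff lam)"
proof -
  assume q: "Poly_Mapping.keys q \<subseteq> SDomega"
  have "pD q - dp lam q = lin (\<lambda>w. mono [Op w] - dw lam w) q"
    by (simp add: pD_lin dp_def lin_fun_diff)
  also have "\<dots> \<in> Id_set (S_diff lam)"
    using q SDomega_DL by (intro Id_lin pD_dw) (auto simp: SDomega_def)
  finally show ?thesis .
qed

lemma ring_aux3:
  fixes A B C D :: "'r::ring"
  shows "A * C - B * D = (A - B) * C + B * (C - D)"
  by (simp add: algebra_simps)

lemma word_red:
  assumes "wfl w" "\<And>l. l \<in> set w \<Longrightarrow> mono [l] - Nl lam l \<in> Id_set (S_diff lam)"
  shows "mono w - Nw lam w \<in> Id_set (S_diff lam)"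
  using assms
proof (induction w)
  case Nil then show ?case by (simp add: mono_nil Id_set.id_zero)
next
  case (Cons l r)
  have r: "wfl r" using Cons.prems by (simp add: wfl_def)
  have IH: "mono r - Nw lam r \<in> Id_set (S_diff lam)" using Cons r by simp
  have a: "(mono [l] - Nl lam l) * mono r \<in> Id_set (S_diff lam)"
    using Cons.prems r by (intro Id_rmul) (auto simp: keys_mono)
  have kN: "\<forall>k\<in>Poly_Mapping.keys (Nl lam l). wfl k"
  proof
    fix k assume "k \<in> Poly_Mapping.keys (Nl lam l)"
    moreover have "Poly_Mapping.keys (Nl lam l) \<subseteq> SDomega" by (rule keys_N)
    ultimately show "wfl k" using Dpow_wf by (auto simp: SDomega_def wfl_def)
  qed
  have b: "Nl lam l * (mono r - Nw lam r) \<in> Id_set (S_diff lam)"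
    using IH kN by (rule Id_lmul)
  have "mono (l # r) - Nw lam (l # r) = (mono [l] - Nl lam l) * mono r + Nl lam l * (mono r - Nw lam r)"
    unfolding Nw.simps mono_cons[of l r] by (rule ring_aux3)
  then show ?case using a b by (simp add: Id_set.id_add)
qed

lemma letter_red: "wf_letter l \<Longrightarrow> mono [l] - Nl lam l \<in> Id_set (S_diff lam)"
proof (induction l)
  case (Var x) then show ?case by (simp add: Id_set.id_zero)
next
  case (Op v)
  then have v: "v \<noteq> []" "wfl v" by (auto simp: wfl_def)
  have W: "mono v - Nw lam v \<in> Id_set (S_diff lam)"
    using v Op by (intro word_red) (auto simp: wfl_def)
  have "Poly_Mapping.keys (Nw lam v) \<subseteq> DL \<and> (v \<noteq> [] \<longrightarrow> Poly_Mapping.keys (Nw lam v) \<subseteq> SDomega)" by (rule keys_Nw)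
  then have kv: "Poly_Mapping.keys (Nw lam v) \<subseteq> SDomega" using v by simp
  have eq: "mono [Op v] - Nl lam (Op v) = pD (mono v - Nw lam v) + (pD (Nw lam v) - dp lam (Nw lam v))"
    by (simp add: pD_diff pD_mono)
  show ?case unfolding eq by (intro Id_set.id_add Id_pD[OF W] pD_dp[OF kv])
qed

lemma NP_red:
  assumes "is_opoly f"
  shows "f - NP lam f \<in> Id_set (S_diff lam)"
proof -
  have "f - NP lam f = lin (\<lambda>w. mono w - Nw lam w) f"
    by (simp add: lin_fun_diff lin_mono_id NP_def)
  also have "\<dots> \<in> Id_set (S_diff lam)"
  proof (rule Id_lin)
    fix w assume "w \<in> Poly_Mapping.keys f"
    then have "wf_word w" using assms by (simp add: is_opoly_def)
    then show "mono w - Nw lam w \<in> Id_set (S_diff lam)"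
      by (intro word_red letter_red) (auto simp: wf_word_def wfl_def)
  qed
  finally show ?thesis .
qed

lemma keys_NP:
  assumes "is_opoly f"
  shows "Poly_Mapping.keys (NP lam f) \<subseteq> SDomega"
proof -
  have "Poly_Mapping.keys (NP lam f) \<subseteq> (\<Union>u\<in>Poly_Mapping.keys f. Poly_Mapping.keys (Nw lam u))"
    unfolding NP_def by (rule keys_lin)
  also have "\<dots> \<subseteq> SDomega"
    using assms keys_Nw by (fastforce simp: is_opoly_def wf_word_def)
  finally show ?thesis .
qed


section \<open>Leading words of the generators\<close>

lemma deg_letter_pos: "wf_letter l \<Longrightarrow> deg_letter l \<ge> 1"
proof (induction l)
  case (Var x) then show ?case by simp
next
  case (Op v)
  then obtain a r where v: "v = a # r" by (cases v) auto
  then have "deg_letter a \<ge> 1" using Op by auto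
  then show ?case using v by simp
qed

lemma deg_word_append: "deg_word (a @ b) = deg_word a + deg_word b"
  by (simp add: deg_word_def)

lemma deg_word_pos: "wf_word w \<Longrightarrow> deg_word w \<ge> 1"
  by (cases w) (auto simp: wf_word_def deg_word_def dest: deg_letter_pos)

lemma deg_word_cons: "deg_word (a # w) = deg_letter a + deg_word w"
  by (simp add: deg_word_def)

lemma deg_Op: "deg_letter (Op v) = deg_word v"
  by (simp add: deg_word_def)

lemma word_less_deg: "word_less u v \<Longrightarrow> deg_word u \<le> deg_word v"
  by (induction rule: word_less.cases) auto

inductive_cases WLE: "word_less u v"
inductive_cases LXE: "lex_less (a # u) (b # v)"
inductive_cases LLE: "letter_less (Op u) b"

lemma not_less_W:
  assumes "deg_word (b # t) = deg_word z" "deg_letter b < deg_word z"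
  shows "\<not> word_less [Op z] (b # t)"
proof
  assume "word_less [Op z] (b # t)"
  then have "lex_less [Op z] (b # t)" using assms(1)
    by (auto elim!: WLE simp: deg_word_def)
  then show False
  proof (rule LXE)
    assume "letter_less (Op z) b"
    then show False
    proof (rule LLE)
      fix v assume "b = Op v" "word_less z v"
      then show False using word_less_deg[of z v] assms(2) by (simp add: deg_word_def)
    qed
  next
    assume "b = Op z" "lex_less [] t"
    then show False using assms(2) by (auto simp: deg_word_def)
  qed
qed

lemma less_W:
  assumes "deg_word (b # t) = deg_word z" "deg_letter b < deg_word z"
  shows "word_less (b # t) [Op z]"
proof -
  have "letter_less b (Op z)"
  proof (cases b)
    case (Var x) then show ?thesis by (simp add: ll_var_op)
  next
    case (Op v)
    have "word_less v z" using assms(2) Op by (intro wl_deg) (simp add: deg_word_def)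
    then show ?thesis unfolding Op by (rule ll_op)
  qed
  then have "lex_less (b # t) [Op z]" by (rule lx_head)
  then show ?thesis using assms(1) by (intro wl_lex) (auto simp: deg_word_def)
qed

definition gen :: "'k::comm_ring_1 \<Rightarrow> 'a letter list \<Rightarrow> 'a letter list \<Rightarrow> ('a,'k) opoly" where
  "gen lam x y = pD (pmul (mono x) (mono y)) - pmul (pD (mono x)) (mono y)
                   - pmul (mono x) (pD (mono y)) - smult lam (pmul (pD (mono x)) (pD (mono y)))"

lemma S_diff_gen: "S_diff lam = {gen lam x y | x y. wf_word x \<and> wf_word y}"
  by (simp add: S_diff_def gen_def)

lemma gen_eq: "gen lam x y = mono [Op (x @ y)] - mono (Op x # y) - mono (x @ [Op y]) - sc lam (mono [Op x, Op y])"
  by (simp add: gen_def pmul_eq smult_sc pD_mono mono_mult)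

lemma lead_gen:
  fixes lam :: "'k::comm_ring_1" and x y :: "'a::linorder letter list"
  assumes x: "wf_word x" and y: "wf_word y"
  shows "lead (gen lam x y) = [Op (x @ y)]"
proof -
  let ?W = "[Op (x @ y)]" and ?s = "gen lam x y"
  have dx: "deg_word x \<ge> 1" and dy: "deg_word y \<ge> 1" using deg_word_pos[OF x] deg_word_pos[OF y] by auto
  obtain a x' where xa: "x = a # x'" using x by (cases x) (auto simp: wf_word_def)
  obtain b y' where yb: "y = b # y'" using y by (cases y) (auto simp: wf_word_def)
  have da: "deg_letter a \<le> deg_word x" using xa by (simp add: deg_word_cons)
  have ks: "Poly_Mapping.keys ?s \<subseteq> {?W, Op x # y, x @ [Op y], [Op x, Op y]}"
    unfolding gen_eq using keys_sc[of lam "mono [Op x, Op y] :: ('a,'k) opoly"]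
    by (auto simp: keys_mono dest!: subsetD[OF keys_diff] split: if_splits)
  have ne: "?W \<noteq> Op x # y" "?W \<noteq> x @ [Op y]" "?W \<noteq> [Op x, Op y]" using yb xa by auto
  have "Poly_Mapping.lookup ?s ?W = 1"
    unfolding gen_eq using ne
    by (simp add: lookup_minus lookup_sc mono_def lookup_single when_def)
  then have Win: "?W \<in> Poly_Mapping.keys ?s" by (simp add: in_keys_iff)
  have dd: "deg_word x < deg_word (x @ y)" "deg_letter (Op x) = deg_word x" "deg_word [Op y] = deg_word y"
    using dy by (auto simp: deg_word_def)
  have e2: "x @ [Op y] = a # (x' @ [Op y])" using xa by simp
  have g2: "deg_word (a # (x' @ [Op y])) = deg_word (x @ y)" using xa by (simp add: deg_word_def)
  have l1: "word_less (Op x # y) ?W" "word_less (x @ [Op y]) ?W" "word_less [Op x, Op y] ?W"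
    and n1: "\<not> word_less ?W (Op x # y)" "\<not> word_less ?W (x @ [Op y])" "\<not> word_less ?W [Op x, Op y]"
    using less_W[of "Op x" y "x @ y"] not_less_W[of "Op x" y "x @ y"]
      less_W[of a "x' @ [Op y]" "x @ y"] not_less_W[of a "x' @ [Op y]" "x @ y"]
      less_W[of "Op x" "[Op y]" "x @ y"] not_less_W[of "Op x" "[Op y]" "x @ y"]
      dd da g2 unfolding e2
    by (simp_all add: deg_word_cons deg_word_append)
  have P: "?W \<in> Poly_Mapping.keys ?s \<and> (\<forall>v\<in>Poly_Mapping.keys ?s. v \<noteq> ?W \<longrightarrow> word_less v ?W)"
    using Win ks l1 by auto
  have U: "w = ?W" if "w \<in> Poly_Mapping.keys ?s \<and> (\<forall>v\<in>Poly_Mapping.keys ?s. v \<noteq> w \<longrightarrow> word_less v w)" for w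
  proof (rule ccontr)
    assume "w \<noteq> ?W"
    then have "word_less ?W w" using that Win by auto
    moreover have "w \<in> {Op x # y, x @ [Op y], [Op x, Op y]}" using that ks \<open>w \<noteq> ?W\<close> by auto
    ultimately show False using n1 by auto
  qed
  show ?thesis unfolding lead_def by (rule the_equality) (use P U in blast)+
qed


section \<open>Irr(S) = S(D^omega(X))\<close>

lemma Irr_char:
  "Irr (S_diff lam :: ('a::linorder,'k::comm_ring_1) opoly set) =
     {w. wf_word w \<and> (\<forall>(u::'a option letter list) x y. star_word u \<longrightarrow> wf_word x \<longrightarrow> wf_word y \<longrightarrow> w \<noteq> subst u [Op (x @ y)])}"
proof -
  have "(\<forall>(u::'a option letter list) s. star_word u \<longrightarrow> s \<in> ({gen lam x y | x y. wf_word x \<and> wf_word y} :: ('a,'k) opoly set) \<longrightarrow> w \<noteq> subst u (lead s))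
     \<longleftrightarrow> (\<forall>(u::'a option letter list) x y. star_word u \<longrightarrow> wf_word x \<longrightarrow> wf_word y \<longrightarrow> w \<noteq> subst u [Op (x @ y)])" for w :: "'a letter list"
  proof
    assume H: "\<forall>(u::'a option letter list) s. star_word u \<longrightarrow> s \<in> ({gen lam x y | x y. wf_word x \<and> wf_word y} :: ('a,'k) opoly set) \<longrightarrow> w \<noteq> subst u (lead s)"
    show "\<forall>(u::'a option letter list) x y. star_word u \<longrightarrow> wf_word x \<longrightarrow> wf_word y \<longrightarrow> w \<noteq> subst u [Op (x @ y)]"
    proof (intro allI impI)
      fix u :: "'a option letter list" and x y :: "'a letter list" assume a: "star_word u" "wf_word x" "wf_word y"
      then have "w \<noteq> subst u (lead (gen lam x y))" using H by blast
      then show "w \<noteq> subst u [Op (x @ y)]" using lead_gen[OF a(2,3), where lam=lam] by metis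
    qed
  next
    assume H: "\<forall>(u::'a option letter list) x y. star_word u \<longrightarrow> wf_word x \<longrightarrow> wf_word y \<longrightarrow> w \<noteq> subst u [Op (x @ y)]"
    show "\<forall>(u::'a option letter list) s. star_word u \<longrightarrow> s \<in> ({gen lam x y | x y. wf_word x \<and> wf_word y} :: ('a,'k) opoly set) \<longrightarrow> w \<noteq> subst u (lead s)"
    proof (intro allI impI)
      fix u :: "'a option letter list" and s assume a: "star_word u" "s \<in> ({gen lam x y | x y. wf_word x \<and> wf_word y} :: ('a,'k) opoly set)"
      then obtain x y where "s = gen lam x y" "wf_word x" "wf_word y" by blast
      then show "w \<noteq> subst u (lead s)" using H a(1) lead_gen by metis
    qed
  qed
  then show ?thesis unfolding Irr_def S_diff_gen by blast
qed

fun bad :: "'a letter \<Rightarrow> bool" where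
  "bad (Var x) = False"
| "bad (Op v) = (2 \<le> length v \<or> (\<exists>l\<in>set v. bad l))"

lemma Dpow_not_bad: "Dpow l \<Longrightarrow> \<not> bad l"
  by (induction rule: Dpow.induct) auto

lemma wf_not_bad_Dpow: "wf_letter l \<Longrightarrow> \<not> bad l \<Longrightarrow> Dpow l"
proof (induction l)
  case (Var x) then show ?case by (simp add: Dpow.intros)
next
  case (Op v)
  then obtain l' where v: "v = [l']" by (cases v) (auto simp: Suc_le_eq)
  then show ?case using Op by (auto intro: Dpow.intros)
qed

lemma sum_list_pos: "1 \<le> sum_list (map f xs) \<Longrightarrow> \<exists>x\<in>set xs. (1::nat) \<le> f x"
  by (induction xs) (auto simp: Suc_le_eq)

lemma bad_subst_letter:
  assumes "\<exists>b\<in>set c. bad b"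
  shows "star_count_letter l \<ge> 1 \<Longrightarrow> \<exists>b\<in>set (subst_letter c l). bad b"
proof (induction l)
  case (Var x) then show ?case using assms by (cases x) auto
next
  case (Op v)
  then obtain l' where "l' \<in> set v" "star_count_letter l' \<ge> 1"
    using sum_list_pos[of star_count_letter v] by auto
  then obtain b where "b \<in> set (subst_letter c l')" "bad b" using Op by blast
  then show ?case using \<open>l' \<in> set v\<close> by auto
qed

lemma bad_subst:
  assumes "star_word u" "\<exists>b\<in>set c. bad b"
  shows "\<exists>b\<in>set (subst u c). bad b"
proof -
  obtain l where "l \<in> set u" "star_count_letter l \<ge> 1"
    using assms(1) sum_list_pos[of star_count_letter u] by (auto simp: star_word_def)
  then show ?thesis using bad_subst_letter[OF assms(2)] by (fastforce simp: subst_def)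
qed

lemma bad_decomp: "wf_letter l \<Longrightarrow> bad l \<Longrightarrow>
    \<exists>u x y. star_word u \<and> wf_word x \<and> wf_word y \<and> [l] = subst u [Op (x @ y)]"
proof (induction l)
  case (Var x) then show ?case by simp
next
  case (Op v)
  show ?case
  proof (cases "2 \<le> length v")
    case True
    then obtain a r where v0: "v = a # r" by (cases v) auto
    then have v: "v = a # r" "r \<noteq> []" using True by auto
    have "wf_word [a]" "wf_word r" using Op v by (auto simp: wf_word_def)
    moreover have "[Op v] = subst [Var None] [Op ([a] @ r)]" using v by (simp add: subst_def)
    ultimately show ?thesis using star_var by blast
  next
    case False
    then obtain l' where v: "v = [l']" using Op by (cases v) (auto simp: Suc_le_eq)
    then have "wf_letter l'" "bad l'" using Op False by auto
    then obtain u x y where "star_word u" "wf_word x" "wf_word y" "[l'] = subst u [Op (x @ y)]"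
      using Op v by auto
    then show ?thesis using v star_Op[of u] by metis
  qed
qed

lemma Irr_SDomega: "Irr (S_diff lam :: ('a::linorder,'k::comm_ring_1) opoly set) = SDomega"
proof
  show "Irr (S_diff lam :: ('a,'k) opoly set) \<subseteq> SDomega"
  proof
    fix w assume "w \<in> Irr (S_diff lam :: ('a,'k) opoly set)"
    then have w: "wf_word w" and nw: "\<And>u x y. star_word u \<Longrightarrow> wf_word x \<Longrightarrow> wf_word y \<Longrightarrow> w \<noteq> subst u [Op (x @ y)]"
      unfolding Irr_char by auto
    have "Dpow l" if lw: "l \<in> set w" for l
    proof (rule ccontr)
      assume "\<not> Dpow l"
      have wl: "wf_letter l" using w lw by (simp add: wf_word_def)
      then have bl: "bad l" using wf_not_bad_Dpow \<open>\<not> Dpow l\<close> by blast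
      obtain u x y where u: "star_word u" "wf_word x" "wf_word y" "[l] = subst u [Op (x @ y)]"
        using bad_decomp[OF wl bl] by blast
      obtain pre post where wsplit: "w = pre @ l # post" using split_list[OF lw] by blast
      have wp: "wfl pre" "wfl post" using w wsplit by (auto simp: wf_word_def wfl_def)
      have "subst (map lift_letter pre @ u @ map lift_letter post) [Op (x @ y)] = pre @ subst u [Op (x @ y)] @ post"
        by (rule star_ctx(2)[OF u(1) wp])
      then have "w = subst (map lift_letter pre @ u @ map lift_letter post) [Op (x @ y)]"
        "star_word (map lift_letter pre @ u @ map lift_letter post)"
        using star_ctx(1)[OF u(1) wp] wsplit by (simp_all flip: u(4))
      then show False using nw u by blast
    qed
    then show "w \<in> SDomega" using w by (auto simp: SDomega_def wf_word_def)
  qed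
next
  show "SDomega \<subseteq> Irr (S_diff lam :: ('a,'k) opoly set)"
  proof
    fix w :: "'a letter list" assume w: "w \<in> SDomega"
    have "wf_word w" using w Dpow_wf by (auto simp: SDomega_def wf_word_def)
    moreover have "w \<noteq> subst u [Op (x @ y)]" if th: "star_word u" "wf_word x" "wf_word y" for u x y
    proof
      assume e: "w = subst u [Op (x @ y)]"
      have "2 \<le> length (x @ y)" using th by (cases x; cases y) (auto simp: wf_word_def)
      then have "\<exists>b\<in>set [Op (x @ y)]. bad b" by simp
      then obtain b where "b \<in> set w" "bad b" using bad_subst[OF th(1)] e by blast
      then show False using w Dpow_not_bad by (auto simp: SDomega_def)
    qed
    ultimately show "w \<in> Irr (S_diff lam :: ('a,'k) opoly set)" unfolding Irr_char by blast
  qed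
qed

theorem theorem5p4:
  fixes lam :: "'k::comm_ring_1"
  defines "S \<equiv> (S_diff lam :: ('a::wellorder, 'k) opoly set)"
  shows "Irr S = SDomega
    \<and> (\<forall>f. is_opoly f \<longrightarrow> (\<exists>g. Poly_Mapping.keys g \<subseteq> Irr S \<and> f - g \<in> Id_set S))
    \<and> (\<forall>g. Poly_Mapping.keys g \<subseteq> Irr S \<longrightarrow> g \<in> Id_set S \<longrightarrow> g = 0)"
proof (intro conjI allI impI)
  show I: "Irr S = SDomega" unfolding S_def by (rule Irr_SDomega)
  fix f :: "('a,'k) opoly" assume "is_opoly f"
  then show "\<exists>g. Poly_Mapping.keys g \<subseteq> Irr S \<and> f - g \<in> Id_set S"
    using keys_NP NP_red I unfolding S_def by blast
next
  fix g :: "('a,'k) opoly" assume g: "Poly_Mapping.keys g \<subseteq> Irr S" "g \<in> Id_set S"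
  have "Irr S = SDomega" unfolding S_def by (rule Irr_SDomega)
  then have "NP lam g = g" using g NP_SDomega by metis
  moreover have "NP lam g = 0" using g NP_Id unfolding S_def by blast
  ultimately show "g = 0" by simp
qed

end
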